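(* Let $z\in\mathbb{R}$ and $\tau\in\mathcal{L}$ with $C(\tau)=\{z\}$. Then $(\mathbb{R},\tau)$ is second countable if and only if the point $z$ has a countable local base in $(\mathbb{R},\tau)$; and $(\mathbb{R},\tau)$ is completely normal if and only if it is regular.
   Context: $\eta$ denotes the Euclidean topology on $\mathbb{R}$. $\mathcal{L}$ denotes the family of all Hausdorff topologies $\tau$ on $\mathbb{R}$ with $\tau\subset\eta$. For $\tau\in\mathcal{L}$ and $a\in\mathbb{R}$ let $\mathcal{N}_\tau(a)$ be the neighborhood filter of $a$ in $(\mathbb{R},\tau)$; $C(\tau)$ is the set of all $a\in\mathbb{R}$ with $\mathcal{N}_\tau(a)\neq\mathcal{N}_\eta(a)$. *)

theory Defs
  imports "HOL-Analysis.Analysis"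
begin

text \<open>The family L: Hausdorff topologies on the reals coarser than the Euclidean one.\<close>
definition coarser_Hausdorff :: "real topology \<Rightarrow> bool" where
  "coarser_Hausdorff T \<longleftrightarrow> topspace T = UNIV \<and> Hausdorff_space T \<and>
     (\<forall>S. openin T S \<longrightarrow> openin euclidean S)"

definition nbhds :: "'a topology \<Rightarrow> 'a \<Rightarrow> 'a set set" where
  "nbhds T a = {N. \<exists>U. openin T U \<and> a \<in> U \<and> U \<subseteq> N}"

definition Cset :: "real topology \<Rightarrow> real set" where
  "Cset T = {a. nbhds T a \<noteq> nbhds euclidean a}"

definition countable_local_base :: "'a topology \<Rightarrow> 'a \<Rightarrow> bool" where
  "countable_local_base T z \<longleftrightarrow>
     (\<exists>\<B>. countable \<B> \<and> (\<forall>V\<in>\<B>. openin T V \<and> z \<in> V) \<and>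
        (\<forall>U. openin T U \<and> z \<in> U \<longrightarrow> (\<exists>V\<in>\<B>. V \<subseteq> U)))"

definition completely_normal_space :: "'a topology \<Rightarrow> bool" where
  "completely_normal_space T \<longleftrightarrow> hereditarily normal_space T"

end

theory Submission
  imports Defs
begin

lemma lindelof_top_of_set: "Lindelof_space (top_of_set (S::real set))"
  unfolding Lindelof_space_def
proof clarify
  fix \<U> assume u: "\<forall>U\<in>\<U>. openin (top_of_set S) U" "\<Union>\<U> = topspace (top_of_set S)"
  obtain \<F>' where "\<F>' \<subseteq> \<U>" "countable \<F>'" "\<Union>\<F>' = \<Union>\<U>"
    using Lindelof_openin[of \<U> S] u(1) by blast
  then show "\<exists>\<V>. countable \<V> \<and> \<V> \<subseteq> \<U> \<and> \<Union>\<V> = topspace (top_of_set S)"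
    using u by auto
qed

lemma a1: "countable ((\<lambda>(p,q). {p<..<q} - {z::real}) ` (\<rat> \<times> \<rat>))"
  by (intro countable_image countable_SIGMA ballI countable_rat)
lemma a2: "\<forall>V\<in>((\<lambda>(p,q). {p<..<q} - {z::real}) ` (\<rat> \<times> \<rat>)). open V \<and> z \<notin> V"
  by auto
lemma a3: assumes "open (U::real set)" "x \<in> U" obtains e where "e > 0" "ball x e \<subseteq> U"
  using assms open_contains_ball by blast
lemma a4: "x - e < p \<Longrightarrow> p < x \<Longrightarrow> x < q \<Longrightarrow> q < x+e \<Longrightarrow> {p<..<q} \<subseteq> ball (x::real) e"
  by (auto simp: dist_real_def)
lemma a5: assumes "e > 0" obtains p where "p \<in> \<rat>" "(x::real) - e < p" "p < x"
  using Rats_dense_in_real[of "x - e" x] assms by auto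
lemma a6: assumes "e > 0" obtains q where "q \<in> \<rat>" "(x::real) < q" "q < x + e"
  using Rats_dense_in_real[of x "x + e"] assms by auto
lemma a7: "p \<in> \<rat> \<Longrightarrow> q \<in> \<rat> \<Longrightarrow> {p<..<q} - {z} \<in> ((\<lambda>(p,q). {p<..<q} - {z::real}) ` (\<rat> \<times> \<rat>))"
  by (rule image_eqI[of _ _ "(p,q)"]) auto

theorem lemma4:
  fixes T :: "real topology" and z :: real
  assumes "coarser_Hausdorff T" and "Cset T = {z}"
  shows "(second_countable T \<longleftrightarrow> countable_local_base T z) \<and>
         (completely_normal_space T \<longleftrightarrow> regular_space T)"
proof -
  have top: "topspace T = UNIV" and haus: "Hausdorff_space T"
    and coarse: "\<And>S. openin T S \<Longrightarrow> open S"
    using assms(1) unfolding coarser_Hausdorff_def by auto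
  have nb: "nbhds T a = nbhds euclidean a" if "a \<noteq> z" for a
    using assms(2) that unfolding Cset_def by blast
  have K: "\<exists>V. openin T V \<and> a \<in> V \<and> V \<subseteq> U" if "a \<noteq> z" "open U" "a \<in> U" for a U
  proof -
    have "U \<in> nbhds euclidean a" using that unfolding nbhds_def by auto
    then have "U \<in> nbhds T a" using nb[OF that(1)] by simp
    then show ?thesis unfolding nbhds_def by auto
  qed
  have K2: "openin T U" if "open U" "z \<notin> U" for U
  proof (subst openin_subopen, intro ballI)
    fix x assume "x \<in> U"
    then have "x \<noteq> z" using that by auto
    then show "\<exists>V. openin T V \<and> x \<in> V \<and> V \<subseteq> U" using K that \<open>x \<in> U\<close> by blast
  qed
  have cont: "continuous_map (top_of_set S) (subtopology T S) id" for S
  proof -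
    have "continuous_map euclidean T id"
      unfolding continuous_map_def using top coarse by auto
    then show ?thesis
      by (simp add: continuous_map_into_subtopology continuous_map_from_subtopology)
  qed
  have P1: "second_countable T \<longleftrightarrow> countable_local_base T z"
  proof
    assume "second_countable T"
    then obtain \<B> where B: "countable \<B>" "\<forall>V \<in> \<B>. openin T V"
      "\<forall>U x. openin T U \<and> x \<in> U \<longrightarrow> (\<exists>V \<in> \<B>. x \<in> V \<and> V \<subseteq> U)"
      unfolding second_countable_def by blast
    show "countable_local_base T z"
      unfolding countable_local_base_def
      apply (rule exI[of _ "{V\<in>\<B>. z \<in> V}"])
    proof (intro conjI allI impI)
      show "countable {V \<in> \<B>. z \<in> V}" using B(1) by simp
      show "\<forall>V\<in>{V \<in> \<B>. z \<in> V}. openin T V \<and> z \<in> V" using B(2) by simp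
      fix U assume "openin T U \<and> z \<in> U"
      then obtain V where "V \<in> \<B>" "z \<in> V" "V \<subseteq> U" using B(3) by blast
      then show "\<exists>V\<in>{V \<in> \<B>. z \<in> V}. V \<subseteq> U" by blast
    qed
  next
    assume "countable_local_base T z"
    then obtain \<B> where B: "countable \<B>" "\<forall>V\<in>\<B>. openin T V \<and> z \<in> V"
      "\<forall>U. openin T U \<and> z \<in> U \<longrightarrow> (\<exists>V\<in>\<B>. V \<subseteq> U)"
      unfolding countable_local_base_def by blast
    define R where "R = (\<lambda>(p,q). {p<..<q} - {z::real}) ` (\<rat> \<times> \<rat>)"
    have cR: "countable R" unfolding R_def by (rule a1)
    have oR: "\<forall>V\<in>R. openin T V"
    proof
      fix V assume "V \<in> R"
      then have "open V \<and> z \<notin> V" using a2[of z] unfolding R_def by blast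
      then show "openin T V" using K2 by blast
    qed
    show "second_countable T"
      unfolding second_countable_def
    proof (intro exI[of _ "\<B> \<union> R"] conjI allI impI)
      show "countable (\<B> \<union> R)" using B(1) cR by simp
      show "\<forall>V\<in>\<B> \<union> R. openin T V" using B(2) oR by blast
      fix U x assume ux: "openin T U \<and> x \<in> U"
      show "\<exists>V\<in>\<B> \<union> R. x \<in> V \<and> V \<subseteq> U"
      proof (cases "x = z")
        case True
        then obtain V where "V \<in> \<B>" "V \<subseteq> U" using B(3) ux by blast
        moreover have "x \<in> V" using B(2) True \<open>V \<in> \<B>\<close> by blast
        ultimately show ?thesis by blast
      next
        case False
        have "open (U - {z})" using coarse ux by (simp add: open_Diff)
        moreover have "x \<in> U - {z}" using ux False by blast
        ultimately obtain e where e: "e > 0" "ball x e \<subseteq> U - {z}"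
          by (rule a3)
        obtain p where p: "p \<in> \<rat>" "x - e < p" "p < x"
          using a5[OF e(1)] by blast
        obtain q where q: "q \<in> \<rat>" "x < q" "q < x + e"
          using a6[OF e(1)] by blast
        have sub: "{p<..<q} \<subseteq> ball x e"
          using a4 p q by blast
        have "{p<..<q} - {z} \<in> R" unfolding R_def using a7 p(1) q(1) by blast
        moreover have "x \<in> {p<..<q} - {z}" using p q False by auto
        moreover have "{p<..<q} - {z} \<subseteq> U" using sub e by blast
        ultimately show ?thesis by (meson UnI2)
      qed
    qed
  qed
  have P2: "completely_normal_space T \<longleftrightarrow> regular_space T"
  proof
    assume "completely_normal_space T"
    then have "normal_space (subtopology T (topspace T))"
      unfolding completely_normal_space_def hereditarily_def by blast
    then have "normal_space T" by simp
    then show "regular_space T"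
      by (rule normal_t1_imp_regular_space[OF _ Hausdorff_imp_t1_space[OF haus]])
  next
    assume r: "regular_space T"
    show "completely_normal_space T"
      unfolding completely_normal_space_def hereditarily
    proof
      fix S
      have "Lindelof_space (subtopology T S)"
        apply (rule Lindelof_space_continuous_map_image[OF lindelof_top_of_set cont])
        using top by simp
      then show "normal_space (subtopology T S)"
        by (rule regular_Lindelof_imp_normal_space[OF regular_space_subtopology[OF r]])
    qed
  qed
  show ?thesis using P1 P2 by blast
qed

end
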